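(* Let $\sigma>0$, $\rho>0$, $C>2$, $\mu\in\mathbb{R}^n$, and let $\nu_1,\dots,\nu_M\in\mathbb{R}^n$ be fixed points with $\min_i\|\nu_i-\mu\|\le\rho$. Let $\tilde Y^2=\mu+\xi-\eta$ where $\xi,\eta\sim N(0,\sigma^2\mathbb{I}_n)$ are independent, and let $i^*\in\arg\min_i\|\tilde Y^2-\nu_i\|$. Then $$\mathbb{P}(\|\nu_{i^*}-\mu\|>(C+1)\rho)\le M\exp\big(-(C-2)^2\rho^2/(16\sigma^2)\big).$$
   Context: $\|\cdot\|$ is the Euclidean norm. *)

theory Defs
  imports "HOL-Probability.Probability"
begin

definition iso_gauss_density :: "real \<Rightarrow> real ^ 'n \<Rightarrow> ennreal" where
  "iso_gauss_density \<sigma> x = ennreal (\<Prod>i\<in>UNIV. normal_density 0 \<sigma> (x $ i))"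

end

theory Submission
  imports Defs
begin

lemma mgf1:
  fixes c \<sigma> :: real assumes "\<sigma> > 0"
  shows "(\<integral>\<^sup>+ t. ennreal (exp (c*t) * normal_density 0 \<sigma> t) \<partial>lborel) = ennreal (exp (c^2*\<sigma>^2/2))"
proof -
  have eq: "exp (c*t) * normal_density 0 \<sigma> t = exp (c^2*\<sigma>^2/2) * normal_density (c*\<sigma>^2) \<sigma> t" for t
  proof -
    have "c*t + (- (t - 0)\<^sup>2 / (2 * \<sigma>\<^sup>2)) = c^2*\<sigma>^2/2 + (- (t - c*\<sigma>^2)\<^sup>2 / (2 * \<sigma>\<^sup>2))"
      using assms by (simp add: field_simps power2_eq_square)
    then have "exp (c*t) * exp (- (t - 0)\<^sup>2 / (2 * \<sigma>\<^sup>2)) = exp (c^2*\<sigma>^2/2) * exp (- (t - c*\<sigma>^2)\<^sup>2 / (2 * \<sigma>\<^sup>2))"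
      by (simp add: exp_add[symmetric])
    then show ?thesis unfolding normal_density_def by (simp add: ac_simps)
  qed
  have one: "(\<integral>\<^sup>+ t. ennreal (normal_density (c*\<sigma>^2) \<sigma> t) \<partial>lborel) = 1"
    using assms by (subst nn_integral_eq_integral) (auto simp: integrable_normal_density integral_normal_density)
  have "(\<integral>\<^sup>+ t. ennreal (exp (c*t) * normal_density 0 \<sigma> t) \<partial>lborel)
      = (\<integral>\<^sup>+ t. ennreal (exp (c^2*\<sigma>^2/2)) * ennreal (normal_density (c*\<sigma>^2) \<sigma> t) \<partial>lborel)"
    by (simp add: eq ennreal_mult)
  also have "\<dots> = ennreal (exp (c^2*\<sigma>^2/2)) * (\<integral>\<^sup>+ t. ennreal (normal_density (c*\<sigma>^2) \<sigma> t) \<partial>lborel)"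
    by (rule nn_integral_cmult) auto
  finally show ?thesis using one by simp
qed

lemma Basis_vec_axis: "(Basis :: (real^'n) set) = (\<lambda>i. axis i 1) ` UNIV"
  by (auto simp: Basis_vec_def)

lemma mgfn:
  fixes c \<sigma> :: real and w :: "real^'n" assumes "\<sigma> > 0"
  shows "(\<integral>\<^sup>+ x. iso_gauss_density \<sigma> x * ennreal (exp (c * (x \<bullet> w))) \<partial>lborel) = ennreal (exp (c^2*\<sigma>^2*(norm w)^2/2))"
proof -
  have inj: "inj (\<lambda>i::'n. axis i (1::real))" by (auto simp: inj_def axis_eq_axis)
  have "iso_gauss_density \<sigma> x * ennreal (exp (c * (x \<bullet> w))) =
     (\<Prod>b\<in>Basis. ennreal (exp ((c * (w \<bullet> b)) * (x \<bullet> b)) * normal_density 0 \<sigma> (x \<bullet> b)))" for x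
  proof -
    have "(\<Prod>b\<in>Basis. ennreal (exp ((c * (w \<bullet> b)) * (x \<bullet> b)) * normal_density 0 \<sigma> (x \<bullet> b)))
       = ennreal (\<Prod>b\<in>Basis. exp ((c * (w \<bullet> b)) * (x \<bullet> b)) * normal_density 0 \<sigma> (x \<bullet> b))"
      by (rule prod_ennreal) auto
    also have "(\<Prod>b\<in>Basis. exp ((c * (w \<bullet> b)) * (x \<bullet> b)) * normal_density 0 \<sigma> (x \<bullet> b))
       = exp (\<Sum>b\<in>Basis. (c * (w \<bullet> b)) * (x \<bullet> b)) * (\<Prod>b\<in>Basis. normal_density 0 \<sigma> (x \<bullet> b))"
      by (simp add: prod.distrib exp_sum)
    also have "(\<Sum>b\<in>Basis. (c * (w \<bullet> b)) * (x \<bullet> b)) = c * (x \<bullet> w)"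
      by (simp add: euclidean_inner[of x w] sum_distrib_left ac_simps)
    also have "(\<Prod>b\<in>Basis. normal_density 0 \<sigma> (x \<bullet> b)) = (\<Prod>i\<in>UNIV. normal_density 0 \<sigma> (x $ i))"
      unfolding Basis_vec_axis by (subst prod.reindex[OF inj]) (simp add: inner_axis)
    finally show ?thesis unfolding iso_gauss_density_def
      by (simp add: ennreal_mult' mult.commute)
  qed
  then have "(\<integral>\<^sup>+ x. iso_gauss_density \<sigma> x * ennreal (exp (c * (x \<bullet> w))) \<partial>lborel)
     = (\<integral>\<^sup>+ x. (\<Prod>b\<in>Basis. ennreal (exp ((c * (w \<bullet> b)) * (x \<bullet> b)) * normal_density 0 \<sigma> (x \<bullet> b))) \<partial>lborel)"
    by simp
  also have "\<dots> = (\<Prod>b\<in>(Basis::(real^'n) set). (\<integral>\<^sup>+ t. ennreal (exp ((c * (w \<bullet> b)) * t) * normal_density 0 \<sigma> t) \<partial>lborel))"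
    by (rule nn_integral_lborel_prod[where f = "\<lambda>b t. ennreal (exp ((c * (w \<bullet> b)) * t) * normal_density 0 \<sigma> t)"]) auto
  also have "\<dots> = (\<Prod>b\<in>(Basis::(real^'n) set). ennreal (exp ((c * (w \<bullet> b))^2*\<sigma>^2/2)))"
    using mgf1[OF assms] by simp
  also have "\<dots> = ennreal (\<Prod>b\<in>(Basis::(real^'n) set). exp ((c * (w \<bullet> b))^2*\<sigma>^2/2))"
    by (rule prod_ennreal) auto
  also have "(\<Prod>b\<in>(Basis::(real^'n) set). exp ((c * (w \<bullet> b))^2*\<sigma>^2/2)) = exp (\<Sum>b\<in>(Basis::(real^'n) set). (c * (w \<bullet> b))^2*\<sigma>^2/2)"
    by (simp add: exp_sum)
  also have "(\<Sum>b\<in>(Basis::(real^'n) set). (c * (w \<bullet> b))^2*\<sigma>^2/2) = c^2*\<sigma>^2*(norm w)^2/2"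
  proof -
    have n2: "(norm w)^2 = (\<Sum>b\<in>(Basis::(real^'n) set). (w \<bullet> b)^2)"
      using power2_norm_eq_inner[of w] euclidean_inner[of w w] by (simp add: power2_eq_square)
    show ?thesis unfolding n2
      by (simp add: power_mult_distrib sum_distrib_left sum_divide_distrib ac_simps)
  qed
  finally show ?thesis .
qed

lemma exp_opt:
  fixes s kk a v :: real
  assumes "v > 0" "kk \<ge> 0" "s \<ge> kk * sqrt v" "a > 0"
  shows "- (s / (2*a* v)) * s + (s / (2*a* v))^2 * a * v \<le> - (kk^2) / (4*a)"
proof -
  have "- (s / (2*a* v)) * s + (s / (2*a* v))^2 * a * v = - (s^2) / (4*a* v)"
    using assms by (simp add: field_simps power2_eq_square)
  moreover have "s^2 \<ge> kk^2 * v"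
  proof -
    have "(kk * sqrt v)^2 \<le> s^2" using assms by (intro power_mono) auto
    then show ?thesis using assms by (simp add: power_mult_distrib)
  qed
  then have "s^2 / (4*a* v) \<ge> kk^2 / (4*a)" using assms by (simp add: field_simps)
  ultimately show ?thesis by simp
qed

lemma (in prob_space) tail_bound:
  fixes \<xi> \<eta> :: "'a \<Rightarrow> real^'n" and w :: "real^'n"
  assumes sp: "\<sigma> > 0"
    and dx: "distributed M lborel \<xi> (iso_gauss_density \<sigma>)"
    and dy: "distributed M lborel \<eta> (iso_gauss_density \<sigma>)"
    and ind: "indep_var borel \<xi> borel \<eta>"
    and w: "w \<noteq> 0" and kk: "kk \<ge> 0" and s: "s \<ge> kk * norm w"
  shows "measure M {\<omega>\<in>space M. s \<le> (\<xi> \<omega> - \<eta> \<omega>) \<bullet> w} \<le> exp (- (kk^2) / (4*\<sigma>^2))"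
proof -
  have mx[measurable]: "\<xi> \<in> borel_measurable M" using distributed_measurable[OF dx] by simp
  have my[measurable]: "\<eta> \<in> borel_measurable M" using distributed_measurable[OF dy] by simp
  define v where "v = (norm w)^2"
  have v: "v > 0" using w by (simp add: v_def)
  define l where "l = s / (2*\<sigma>^2* v)"
  define A where "A = {\<omega>\<in>space M. s \<le> (\<xi> \<omega> - \<eta> \<omega>) \<bullet> w}"
  have A[measurable]: "A \<in> sets M" unfolding A_def by measurable
  define F where "F = (\<lambda>\<omega>. exp (l * (\<xi> \<omega> \<bullet> w)))"
  define G where "G = (\<lambda>\<omega>. exp ((-l) * (\<eta> \<omega> \<bullet> w)))"
  have "emeasure M A = (\<integral>\<^sup>+\<omega>. indicator A \<omega> \<partial>M)" by simp
  also have "\<dots> \<le> (\<integral>\<^sup>+\<omega>. ennreal (exp (- l * s)) * ennreal (F \<omega> * G \<omega>) \<partial>M)"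
  proof (rule nn_integral_mono)
    fix \<omega> assume "\<omega> \<in> space M"
    show "indicator A \<omega> \<le> ennreal (exp (- l * s)) * ennreal (F \<omega> * G \<omega>)"
    proof (cases "\<omega> \<in> A")
      case True
      then have "s \<le> \<xi> \<omega> \<bullet> w - \<eta> \<omega> \<bullet> w" by (simp add: A_def inner_diff_left)
      moreover have "l \<ge> 0" using sp v s kk by (auto simp: l_def intro!: divide_nonneg_pos order_trans[OF _ s])
      ultimately have "l * s \<le> l * (\<xi> \<omega> \<bullet> w - \<eta> \<omega> \<bullet> w)" by (rule mult_left_mono)
      then have "1 \<le> exp (- l * s) * (F \<omega> * G \<omega>)"
        by (simp add: F_def G_def exp_add[symmetric] algebra_simps)
      then show ?thesis using True by (simp add: ennreal_mult'[symmetric])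
    qed simp
  qed
  also have "\<dots> = ennreal (exp (- l * s)) * (\<integral>\<^sup>+\<omega>. ennreal (F \<omega> * G \<omega>) \<partial>M)"
    by (rule nn_integral_cmult) (simp add: F_def G_def)
  also have "(\<integral>\<^sup>+\<omega>. ennreal (F \<omega> * G \<omega>) \<partial>M) = (\<integral>\<^sup>+\<omega>. ennreal (F \<omega>) \<partial>M) * (\<integral>\<^sup>+\<omega>. ennreal (G \<omega>) \<partial>M)"
  proof -
    have ivc: "indep_var borel ((\<lambda>x. ennreal (exp (l * (x \<bullet> w)))) \<circ> \<xi>) borel ((\<lambda>x. ennreal (exp ((-l) * (x \<bullet> w)))) \<circ> \<eta>)"
      by (rule indep_var_compose[OF ind]) auto
    have e1: "case_bool borel borel = (\<lambda>_::bool. borel)" by (auto simp: fun_eq_iff split: bool.split)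
    have e2: "case_bool ((\<lambda>x. ennreal (exp (l * (x \<bullet> w)))) \<circ> \<xi>) ((\<lambda>x. ennreal (exp ((-l) * (x \<bullet> w)))) \<circ> \<eta>)
       = case_bool (\<lambda>\<omega>. ennreal (F \<omega>)) (\<lambda>\<omega>. ennreal (G \<omega>))"
      by (auto simp: fun_eq_iff F_def G_def split: bool.split)
    have iv: "indep_vars (\<lambda>_. borel) (case_bool (\<lambda>\<omega>. ennreal (F \<omega>)) (\<lambda>\<omega>. ennreal (G \<omega>))) UNIV"
      using ivc unfolding indep_var_def e1 e2 .
    have "(\<integral>\<^sup>+\<omega>. (\<Prod>i\<in>UNIV. case_bool (\<lambda>\<omega>. ennreal (F \<omega>)) (\<lambda>\<omega>. ennreal (G \<omega>)) i \<omega>) \<partial>M) = (\<Prod>i\<in>UNIV. \<integral>\<^sup>+\<omega>. case_bool (\<lambda>\<omega>. ennreal (F \<omega>)) (\<lambda>\<omega>. ennreal (G \<omega>)) i \<omega> \<partial>M)"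
      by (rule indep_vars_nn_integral[OF _ iv]) (auto simp: F_def G_def split: bool.split)
    then show ?thesis by (simp add: UNIV_bool mult.commute ennreal_mult' F_def G_def)
  qed
  also have "(\<integral>\<^sup>+\<omega>. ennreal (F \<omega>) \<partial>M) = ennreal (exp (l^2*\<sigma>^2* v/2))"
    unfolding F_def v_def
    by (subst distributed_nn_integral[OF dx, symmetric]) (simp_all add: mgfn[OF sp])
  also have "(\<integral>\<^sup>+\<omega>. ennreal (G \<omega>) \<partial>M) = ennreal (exp (l^2*\<sigma>^2* v/2))"
    unfolding G_def v_def
    by (subst distributed_nn_integral[OF dy, symmetric]) (simp_all add: mgfn[OF sp, of "-l", simplified])
  finally have "emeasure M A \<le> ennreal (exp (- l * s) * exp (l^2*\<sigma>^2* v/2) * exp (l^2*\<sigma>^2* v/2))"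
    by (simp add: ennreal_mult' mult.assoc)
  also have "exp (- l * s) * exp (l^2*\<sigma>^2* v/2) * exp (l^2*\<sigma>^2* v/2) = exp (- l * s + l^2 * \<sigma>^2 * v)"
    by (simp add: exp_add[symmetric])
  also have "\<dots> \<le> exp (- (kk^2) / (4*\<sigma>^2))"
  proof -
    have "- l * s + l^2 * \<sigma>^2 * v \<le> - (kk^2) / (4*\<sigma>^2)"
      using exp_opt[of v kk s "\<sigma>^2"] v kk s sp unfolding l_def v_def
      by (simp add: ac_simps)
    then show ?thesis by simp
  qed
  finally have "emeasure M A \<le> ennreal (exp (- (kk^2) / (4*\<sigma>^2)))" using ennreal_leI by blast
  then show ?thesis unfolding A_def[symmetric] by (simp add: emeasure_eq_measure)
qed

theorem mainTheorem15:
  fixes M :: "'a measure" and \<xi> \<eta> :: "'a \<Rightarrow> real ^ 'n"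
    and \<sigma> \<rho> C :: real and \<mu> :: "real ^ 'n"
    and m :: nat and \<nu> :: "nat \<Rightarrow> real ^ 'n" and istar :: "'a \<Rightarrow> nat"
  assumes "prob_space M"
    and "\<sigma> > 0" and "\<rho> > 0" and "C > 2"
    and "m > 0"
    and "(MIN i\<in>{..<m}. norm (\<nu> i - \<mu>)) \<le> \<rho>"
    and "distributed M lborel \<xi> (iso_gauss_density \<sigma>)"
    and "distributed M lborel \<eta> (iso_gauss_density \<sigma>)"
    and "prob_space.indep_var M borel \<xi> borel \<eta>"
    and "\<And>\<omega>. istar \<omega> < m"
    and "\<And>\<omega> j. j < m \<Longrightarrow>
           norm ((\<mu> + \<xi> \<omega> - \<eta> \<omega>) - \<nu> (istar \<omega>)) \<le> norm ((\<mu> + \<xi> \<omega> - \<eta> \<omega>) - \<nu> j)"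
  shows "measure M {\<omega> \<in> space M. norm (\<nu> (istar \<omega>) - \<mu>) > (C + 1) * \<rho>}
           \<le> real m * exp (- ((C - 2)\<^sup>2 * \<rho>\<^sup>2) / (16 * \<sigma>\<^sup>2))"
proof -
  interpret prob_space M by (rule assms(1))
  note sp = assms(2) and rp = assms(3) and Cp = assms(4)
  have mx[measurable]: "\<xi> \<in> borel_measurable M" using distributed_measurable[OF assms(7)] by simp
  have my[measurable]: "\<eta> \<in> borel_measurable M" using distributed_measurable[OF assms(8)] by simp
  have "(MIN i\<in>{..<m}. norm (\<nu> i - \<mu>)) \<in> (\<lambda>i. norm (\<nu> i - \<mu>)) ` {..<m}"
    using assms(5) by (intro Min_in) auto
  then obtain i0 where i0: "i0 < m" "norm (\<nu> i0 - \<mu>) \<le> \<rho>" using assms(6) by auto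
  define b where "b = \<nu> i0 - \<mu>"
  define w where "w j = (\<nu> j - \<mu>) - b" for j
  define s where "s j = ((norm (\<nu> j - \<mu>))^2 - (norm b)^2) / 2" for j
  define kk where "kk = (C - 2) * \<rho> / 2"
  define F where "F j = {\<omega>\<in>space M. (C+1)*\<rho> < norm (\<nu> j - \<mu>) \<and> s j \<le> (\<xi> \<omega> - \<eta> \<omega>) \<bullet> w j}" for j
  define E where "E = {\<omega> \<in> space M. norm (\<nu> (istar \<omega>) - \<mu>) > (C + 1) * \<rho>}"
  have Fm[measurable]: "F j \<in> sets M" for j unfolding F_def by measurable
  have nb: "norm b \<le> \<rho>" using i0 by (simp add: b_def)
  have kk0: "kk \<ge> 0" using Cp rp by (simp add: kk_def)
  have sub: "E \<subseteq> (\<Union>j\<in>{..<m}. F j)"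
  proof
    fix \<omega> assume "\<omega> \<in> E"
    then have om: "\<omega> \<in> space M" and big: "norm (\<nu> (istar \<omega>) - \<mu>) > (C + 1) * \<rho>" by (auto simp: E_def)
    define j where "j = istar \<omega>"
    define Z where "Z = \<xi> \<omega> - \<eta> \<omega>"
    define a where "a = \<nu> j - \<mu>"
    have "norm ((\<mu> + \<xi> \<omega> - \<eta> \<omega>) - \<nu> j) \<le> norm ((\<mu> + \<xi> \<omega> - \<eta> \<omega>) - \<nu> i0)"
      using assms(11)[OF i0(1)] by (simp add: j_def)
    moreover have "(\<mu> + \<xi> \<omega> - \<eta> \<omega>) - \<nu> j = Z - a" by (simp add: Z_def a_def algebra_simps)
    moreover have "(\<mu> + \<xi> \<omega> - \<eta> \<omega>) - \<nu> i0 = Z - b" by (simp add: Z_def b_def algebra_simps)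
    ultimately have "norm (Z - a) \<le> norm (Z - b)" by simp
    then have "(norm (Z - a))^2 \<le> (norm (Z - b))^2" by (simp add: power_mono)
    then have "(Z - a) \<bullet> (Z - a) \<le> (Z - b) \<bullet> (Z - b)" by (simp add: power2_norm_eq_inner)
    then have "Z \<bullet> Z - 2 * (Z \<bullet> a) + a \<bullet> a \<le> Z \<bullet> Z - 2 * (Z \<bullet> b) + b \<bullet> b"
      by (simp add: inner_diff_left inner_diff_right inner_commute)
    then have "s j \<le> Z \<bullet> w j"
      by (simp add: s_def w_def a_def[symmetric] inner_diff_right power2_norm_eq_inner)
    then have "\<omega> \<in> F j" using om big by (simp add: F_def Z_def j_def)
    moreover have "j < m" using assms(10) by (simp add: j_def)
    ultimately show "\<omega> \<in> (\<Union>j\<in>{..<m}. F j)" by blast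
  qed
  have bound: "measure M (F j) \<le> exp (- (kk^2) / (4*\<sigma>^2))" for j
  proof (cases "(C+1)*\<rho> < norm (\<nu> j - \<mu>)")
    case False
    then have "F j = {}" by (simp add: F_def)
    then show ?thesis by simp
  next
    case True
    define na where "na = norm (\<nu> j - \<mu>)"
    have na: "na > (C+1)*\<rho>" using True by (simp add: na_def)
    have wle: "norm (w j) \<le> na + norm b" unfolding w_def na_def by (rule norm_triangle_ineq4)
    have w0: "w j \<noteq> 0"
    proof
      assume "w j = 0"
      then have "\<nu> j - \<mu> = b" by (simp add: w_def)
      moreover have "\<rho> < (C+1)*\<rho>" using mult_pos_pos[of C \<rho>] Cp rp by (simp add: distrib_right)
      ultimately show False using na nb by (simp add: na_def)
    qed
    have sj: "s j = (na - norm b) * (na + norm b) / 2" by (simp add: s_def na_def power2_eq_square algebra_simps)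
    have d: "(na - norm b) / 2 \<ge> kk" using na nb Cp rp by (simp add: kk_def field_simps)
    have "kk * norm (w j) \<le> (na - norm b) / 2 * norm (w j)" using mult_right_mono[OF d norm_ge_zero[of "w j"]] by simp
    also have "\<dots> \<le> (na - norm b) / 2 * (na + norm b)"
      using wle d kk0 by (intro mult_left_mono) auto
    also have "\<dots> = s j" by (simp add: sj)
    finally have skk: "kk * norm (w j) \<le> s j" .
    have "F j = {\<omega>\<in>space M. s j \<le> (\<xi> \<omega> - \<eta> \<omega>) \<bullet> w j}" using True by (simp add: F_def)
    then show ?thesis using tail_bound[OF sp assms(7) assms(8) assms(9) w0 kk0 skk] by simp
  qed
  have "measure M E \<le> measure M (\<Union>j\<in>{..<m}. F j)"
    by (rule finite_measure_mono[OF sub]) measurable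
  also have "\<dots> \<le> (\<Sum>j<m. measure M (F j))"
    by (rule finite_measure_subadditive_finite) auto
  also have "\<dots> \<le> (\<Sum>j<m. exp (- (kk^2) / (4*\<sigma>^2)))"
    by (rule sum_mono) (rule bound)
  also have "\<dots> = real m * exp (- ((C - 2)\<^sup>2 * \<rho>\<^sup>2) / (16 * \<sigma>\<^sup>2))"
    by (simp add: kk_def power_mult_distrib power_divide)
  finally show ?thesis by (simp add: E_def)
qed

end
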